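(* For every positive integer $s$ and every nonnegative integer $t$ there exists a graph $G$ with $\chi(G)=\omega(G)=s+1$, $i(G)=t$, and $\chi_l(G)=s+t+1$.
   Context: All graphs are finite and simple; $\chi$, $\chi_l$, $\omega$ denote chromatic number, list chromatic number and clique number. A hole of $G$ is an induced cycle of length at least $4$; $G$ is chordal if it has no hole. $\mathcal H(G)$ is the set of holes and $\mathcal H(G,u)$ those containing $u$. A hole cover of $G$ is a nonempty $X\subseteq V(G)$ meeting every hole (any nonempty set if $G$ is chordal). A vertex $u$ satisfies the NC property in $G$ if there are no holes $H\in\mathcal H(G,u)$, $H'\in\mathcal H(G)\setminus\mathcal H(G,u)$ sharing two consecutive edges (two distinct edges with a common end vertex lying on both). A set $\mathcal C$ satisfies the NC property in $G$ if each of its vertices does and every hole contains at most one vertex of $\mathcal C$. Locally chordalizing all holes in $\mathcal H(G,u)$ by $u$ means adding all edges $uw$ with $w\ne u$ lying on some hole in $\mathcal H(G,u)$. For a hole cover $\mathcal C=\{u_1,\dots,u_k\}$ satisfying the NC property in $G$, set $G_0=G$, obtain $G_i$ from $G_{i-1}$ by locally chordalizing all holes in $\mathcal H(G_{i-1},u_i)$ by $u_i$, and put $\widehat G(\mathcal C)=G_k$ (independent of the ordering). Given a hole cover $\mathcal C$ of $G$, an ordered partition $(\mathcal C_1,\dots,\mathcal C_\ell)$ of $\mathcal C$ into nonempty parts is a local chordalization partition if, with $G_0=G_0^*=G-\mathcal C$ and, for $i=1,\dots,\ell$, $G_i$ the graph with $V(G_i)=V(G_{i-1}^* )\cup\mathcal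 C_i$ and $E(G_i)=E(G_{i-1}^* )\cup E\big(G-\bigcup_{j=i+1}^{\ell}\mathcal C_j\big)$ and $G_i^*=\widehat{G_i}(\mathcal C_i)$, each $\mathcal C_i$ is a hole cover of $G_i$ satisfying the NC property in $G_i$ and each $G_i^*$ is chordal. The non-chordality index $i(G)$ is $0$ if $G$ is chordal and otherwise the smallest $\ell$ such that some hole cover of $G$ admits a local chordalization partition with $\ell$ parts. *)

theory Defs
  imports Main
begin

type_synonym 'a graph = "'a set \<times> 'a set set"

definition verts :: "'a graph \<Rightarrow> 'a set" where "verts G = fst G"
definition edges :: "'a graph \<Rightarrow> 'a set set" where "edges G = snd G"

definition wf_graph :: "'a graph \<Rightarrow> bool" where
  "wf_graph G \<longleftrightarrow> finite (verts G) \<and>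
     (\<forall>e\<in>edges G. \<exists>u v. u \<noteq> v \<and> u \<in> verts G \<and> v \<in> verts G \<and> e = {u, v})"

definition adj :: "'a graph \<Rightarrow> 'a \<Rightarrow> 'a \<Rightarrow> bool" where
  "adj G u v \<longleftrightarrow> {u, v} \<in> edges G"

definition induced :: "'a graph \<Rightarrow> 'a set \<Rightarrow> 'a graph" where
  "induced G X = (verts G \<inter> X, {e \<in> edges G. e \<subseteq> X})"

definition delete :: "'a graph \<Rightarrow> 'a set \<Rightarrow> 'a graph" where
  "delete G X = induced G (verts G - X)"

definition hole :: "'a graph \<Rightarrow> 'a set \<Rightarrow> bool" where
  "hole G H \<longleftrightarrow> H \<subseteq> verts G \<and>
     (\<exists>vs. distinct vs \<and> set vs = H \<and> length vs \<ge> 4 \<and>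
        (\<forall>i<length vs. \<forall>j<length vs.
           adj G (vs ! i) (vs ! j) \<longleftrightarrow>
             (j = Suc i mod length vs \<or> i = Suc j mod length vs)))"

definition chordal :: "'a graph \<Rightarrow> bool" where
  "chordal G \<longleftrightarrow> \<not> (\<exists>H. hole G H)"

definition hole_cover :: "'a graph \<Rightarrow> 'a set \<Rightarrow> bool" where
  "hole_cover G X \<longleftrightarrow> X \<subseteq> verts G \<and> X \<noteq> {} \<and> (\<forall>H. hole G H \<longrightarrow> H \<inter> X \<noteq> {})"

text \<open>Two holes share two consecutive edges (holes are induced, so their edges are
  the graph edges inside their vertex sets).\<close>
definition share_two_consec :: "'a graph \<Rightarrow> 'a set \<Rightarrow> 'a set \<Rightarrow> bool" where
  "share_two_consec G H H' \<longleftrightarrow>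
     (\<exists>x y z. x \<noteq> z \<and> {x, y, z} \<subseteq> H \<inter> H' \<and> adj G x y \<and> adj G y z)"

definition NC_vertex :: "'a graph \<Rightarrow> 'a \<Rightarrow> bool" where
  "NC_vertex G u \<longleftrightarrow>
     \<not> (\<exists>H H'. hole G H \<and> u \<in> H \<and> hole G H' \<and> u \<notin> H' \<and> share_two_consec G H H')"

definition NC_set :: "'a graph \<Rightarrow> 'a set \<Rightarrow> bool" where
  "NC_set G C \<longleftrightarrow> (\<forall>u\<in>C. NC_vertex G u) \<and> (\<forall>H. hole G H \<longrightarrow> card (H \<inter> C) \<le> 1)"

definition loc_chordalize :: "'a graph \<Rightarrow> 'a \<Rightarrow> 'a graph" where
  "loc_chordalize G u =
     (verts G, edges G \<union> {{u, w} | w. w \<noteq> u \<and> (\<exists>H. hole G H \<and> u \<in> H \<and> w \<in> H)})"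

fun chordalize_seq :: "'a graph \<Rightarrow> 'a list \<Rightarrow> 'a graph" where
  "chordalize_seq G [] = G"
| "chordalize_seq G (u # us) = chordalize_seq (loc_chordalize G u) us"

text \<open>\<open>\<widehat>G(C)\<close>, for some ordering of the (finite) set C; the paper notes
  the result is independent of the ordering.\<close>
definition hat :: "'a graph \<Rightarrow> 'a set \<Rightarrow> 'a graph" where
  "hat G C = chordalize_seq G (SOME xs. distinct xs \<and> set xs = C)"

text \<open>Checking the conditions of a local chordalization partition, given the
  previous graph \<open>G*_{i-1}\<close> and the remaining parts.\<close>
fun lcp_valid :: "'a graph \<Rightarrow> 'a graph \<Rightarrow> 'a set list \<Rightarrow> bool" where
  "lcp_valid G Gs [] = True"
| "lcp_valid G Gs (Ci # rest) =
     (let Gi = (verts Gs \<union> Ci,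
                edges Gs \<union> edges (delete G (\<Union> (set rest))));
          Gi' = hat Gi Ci
      in hole_cover Gi Ci \<and> NC_set Gi Ci \<and> chordal Gi' \<and> lcp_valid G Gi' rest)"

definition lc_partition :: "'a graph \<Rightarrow> 'a set \<Rightarrow> 'a set list \<Rightarrow> bool" where
  "lc_partition G C Cs \<longleftrightarrow>
     hole_cover G C \<and> Cs \<noteq> [] \<and> (\<forall>X\<in>set Cs. X \<noteq> {}) \<and> \<Union> (set Cs) = C \<and>
     (\<forall>i<length Cs. \<forall>j<length Cs. i \<noteq> j \<longrightarrow> Cs ! i \<inter> Cs ! j = {}) \<and>
     lcp_valid G (delete G C) Cs"

definition nci :: "'a graph \<Rightarrow> nat" where
  "nci G = (if chordal G then 0
            else (LEAST l. \<exists>C Cs. lc_partition G C Cs \<and> length Cs = l))"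

definition proper_coloring :: "'a graph \<Rightarrow> ('a \<Rightarrow> 'c) \<Rightarrow> bool" where
  "proper_coloring G f \<longleftrightarrow>
     (\<forall>u\<in>verts G. \<forall>v\<in>verts G. adj G u v \<longrightarrow> f u \<noteq> f v)"

definition chromatic_number :: "'a graph \<Rightarrow> nat" where
  "chromatic_number G =
     (LEAST k. \<exists>f :: 'a \<Rightarrow> nat. proper_coloring G f \<and> (\<forall>v\<in>verts G. f v < k))"

definition list_chromatic_number :: "'a graph \<Rightarrow> nat" where
  "list_chromatic_number G =
     (LEAST k. \<forall>L :: 'a \<Rightarrow> nat set. (\<forall>v\<in>verts G. finite (L v) \<and> card (L v) = k) \<longrightarrow>
        (\<exists>f. proper_coloring G f \<and> (\<forall>v\<in>verts G. f v \<in> L v)))"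

definition is_clique :: "'a graph \<Rightarrow> 'a set \<Rightarrow> bool" where
  "is_clique G K \<longleftrightarrow> K \<subseteq> verts G \<and> (\<forall>u\<in>K. \<forall>v\<in>K. u \<noteq> v \<longrightarrow> adj G u v)"

definition clique_number :: "'a graph \<Rightarrow> nat" where
  "clique_number G = Max {card K | K. is_clique G K}"

end

theory Submission
  imports Defs
begin


lemma adj_sym: "adj G u v = adj G v u"
  by (simp add: adj_def insert_commute)

definition edges_ok :: "'a graph \<Rightarrow> bool" where
  "edges_ok G \<longleftrightarrow> (\<forall>e\<in>edges G. \<exists>u v. u \<noteq> v \<and> u \<in> verts G \<and> v \<in> verts G \<and> e = {u, v})"

lemma edges_ok_noloop: "edges_ok G \<Longrightarrow> \<not> adj G v v"
  unfolding edges_ok_def adj_def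
  by (metis doubleton_eq_iff insert_absorb2)

lemma edges_ok_adj: "edges_ok G \<Longrightarrow> adj G u v \<Longrightarrow> u \<in> verts G \<and> v \<in> verts G"
  unfolding edges_ok_def adj_def
  by (metis doubleton_eq_iff)

lemma mod_facts:
  fixes k n :: nat
  assumes "n \<ge> 4" "k < n"
  shows "(k+2) mod n \<noteq> k" "(k+2) mod n \<noteq> Suc k mod n" "k \<noteq> Suc ((k+2) mod n) mod n"
    "(k+2) mod n < n" "Suc k mod n < n"
proof -
  have m1: "(k+2) mod n = (if k+2 < n then k+2 else k+2-n)"
    using assms by (simp add: mod_if le_mod_geq)
  have m2: "Suc k mod n = (if Suc k < n then Suc k else 0)"
    using assms by (simp add: mod_if)
  have m3: "Suc x mod n = (if Suc x < n then Suc x else 0)" if "x < n" for x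
    using assms that by (simp add: mod_if)
  show "(k+2) mod n \<noteq> k" using m1 assms by auto
  show "(k+2) mod n \<noteq> Suc k mod n" using m1 m2 assms by auto
  show "(k+2) mod n < n" "Suc k mod n < n" using assms by auto
  then show "k \<noteq> Suc ((k+2) mod n) mod n" using m1 m3[of "(k+2) mod n"] assms by (auto split: if_splits)
qed


lemma hole_facts:
  assumes "distinct vs" "length vs \<ge> 4"
    "\<forall>i<length vs. \<forall>j<length vs. adj G (vs ! i) (vs ! j) \<longleftrightarrow>
             (j = Suc i mod length vs \<or> i = Suc j mod length vs)"
    "k < length vs"
  shows "vs ! k \<noteq> vs ! ((k+2) mod length vs) \<and> \<not> adj G (vs ! k) (vs ! ((k+2) mod length vs))
     \<and> adj G (vs ! k) (vs ! (Suc k mod length vs)) \<and> Suc k mod length vs < length vs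
     \<and> (k+2) mod length vs < length vs"
proof -
  note mf = mod_facts[OF assms(2,4)]
  have "vs ! k \<noteq> vs ! ((k+2) mod length vs)"
    using mf assms(1,4) by (simp add: nth_eq_iff_index_eq)
  moreover have "\<not> adj G (vs ! k) (vs ! ((k+2) mod length vs))"
    using assms(3) mf assms(4) by blast
  moreover have "adj G (vs ! k) (vs ! (Suc k mod length vs))"
    using assms(3) mf assms(4) by blast
  ultimately show ?thesis using mf by blast
qed

lemma hole_obtain:
  assumes "hole G H"
  obtains vs where "distinct vs" "set vs = H" "length vs \<ge> 4"
    "\<forall>i<length vs. \<forall>j<length vs. adj G (vs ! i) (vs ! j) \<longleftrightarrow>
             (j = Suc i mod length vs \<or> i = Suc j mod length vs)" "H \<subseteq> verts G"
  using assms unfolding hole_def by blast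

lemma no_hole_Y:
  assumes "hole G H"
    and "\<forall>x\<in>H. \<forall>y\<in>H. x \<noteq> y \<longrightarrow> \<not> adj G x y \<longrightarrow> x \<in> Y \<and> y \<in> Y"
    and "\<forall>x\<in>H\<inter>Y. \<forall>y\<in>H\<inter>Y. \<not> adj G x y"
  shows False
proof -
  obtain vs where vs: "distinct vs" "set vs = H" "length vs \<ge> 4"
    "\<forall>i<length vs. \<forall>j<length vs. adj G (vs ! i) (vs ! j) \<longleftrightarrow>
             (j = Suc i mod length vs \<or> i = Suc j mod length vs)"
    using assms(1) by (rule hole_obtain)
  have n: "0 < length vs" "1 < length vs" using vs(3) by auto
  have h0: "vs ! 0 \<noteq> vs ! 2 \<and> \<not> adj G (vs ! 0) (vs ! 2) \<and> adj G (vs!0) (vs!1)"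
    using hole_facts[OF vs(1) vs(3) vs(4) n(1)] vs(3) by (simp add: eval_nat_numeral)
  have h1: "vs ! 1 \<noteq> vs ! 3 \<and> \<not> adj G (vs ! 1) (vs ! 3)"
    using hole_facts[OF vs(1) vs(3) vs(4) n(2)] vs(3) by (simp add: eval_nat_numeral)
  have mm: "\<And>i. i < length vs \<Longrightarrow> vs!i \<in> H" using vs(2) nth_mem by blast
  have m: "vs!0 \<in> H" "vs!1 \<in> H" "vs!2 \<in> H" "vs!3 \<in> H" using mm[of 0] mm[of 1] mm[of 2] mm[of 3] vs(3) by linarith+
  show False using assms(2,3) h0 h1 m by blast
qed

lemma hole4:
  assumes "distinct [p,q,r,w]" "adj G p q" "adj G q r" "adj G r w" "adj G w p"
    "\<not> adj G p r" "\<not> adj G q w" "\<And>v. \<not> adj G v v" "{p,q,r,w} \<subseteq> verts G"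
  shows "hole G {p,q,r,w}"
proof -
  have b: "adj G q p" "adj G r q" "adj G w r" "adj G p w" "\<not> adj G r p" "\<not> adj G w q"
    using assms(2-7) adj_sym by metis+
  have l: "\<not> adj G p p" "\<not> adj G q q" "\<not> adj G r r" "\<not> adj G w w" using assms(8) by auto
  have "\<forall>i<4. \<forall>j<4. adj G ([p,q,r,w] ! i) ([p,q,r,w] ! j) \<longleftrightarrow>
             (j = Suc i mod 4 \<or> i = Suc j mod 4)"
  proof (intro allI impI)
    fix i j :: nat assume "i < 4" "j < 4"
    then have "i = 0 \<or> i = 1 \<or> i = 2 \<or> i = 3" "j = 0 \<or> j = 1 \<or> j = 2 \<or> j = 3" by auto
    then show "adj G ([p,q,r,w] ! i) ([p,q,r,w] ! j) \<longleftrightarrow> (j = Suc i mod 4 \<or> i = Suc j mod 4)"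
      using assms(2-7) b l by (elim disjE) simp_all
  qed
  then show ?thesis unfolding hole_def using assms(1,9)
    by (intro conjI exI[of _ "[p,q,r,w]"]) auto
qed


lemma loc_verts[simp]: "verts (loc_chordalize G u) = verts G"
  by (simp add: loc_chordalize_def verts_def)

lemma loc_edges: "edges (loc_chordalize G u) =
   edges G \<union> {{u, w} | w. w \<noteq> u \<and> (\<exists>H. hole G H \<and> u \<in> H \<and> w \<in> H)}"
  by (simp add: loc_chordalize_def edges_def)

lemma cs_verts[simp]: "verts (chordalize_seq G xs) = verts G"
  by (induction xs arbitrary: G) auto

lemma cs_edges_mono: "edges G \<subseteq> edges (chordalize_seq G xs)"
proof (induction xs arbitrary: G)
  case Nil then show ?case by simp
next
  case (Cons a xs)
  have "edges G \<subseteq> edges (loc_chordalize G a)" by (simp add: loc_edges)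
  then show ?case using Cons[of "loc_chordalize G a"] by simp
qed

lemma cs_edges_upper: "edges (chordalize_seq G xs) \<subseteq>
   edges G \<union> {{u, w} | u w. u \<in> set xs \<and> w \<in> verts G \<and> w \<noteq> u}"
proof (induction xs arbitrary: G)
  case Nil then show ?case by simp
next
  case (Cons a xs)
  have "edges (loc_chordalize G a) \<subseteq> edges G \<union> {{u, w} | u w. u \<in> set (a#xs) \<and> w \<in> verts G \<and> w \<noteq> u}"
  proof
    fix e assume "e \<in> edges (loc_chordalize G a)"
    then consider "e \<in> edges G" | w H where "e = {a,w}" "w \<noteq> a" "hole G H" "w \<in> H"
      unfolding loc_edges by blast
    then show "e \<in> edges G \<union> {{u, w} | u w. u \<in> set (a#xs) \<and> w \<in> verts G \<and> w \<noteq> u}"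
    proof cases
      case 1 then show ?thesis by simp
    next
      case 2
      then have "w \<in> verts G" unfolding hole_def by blast
      then show ?thesis using 2 by auto
    qed
  qed
  moreover have "{{u, w} | u w. u \<in> set xs \<and> w \<in> verts G \<and> w \<noteq> u} \<subseteq> {{u, w} | u w. u \<in> set (a#xs) \<and> w \<in> verts G \<and> w \<noteq> u}"
    by auto
  ultimately show ?case using Cons[of "loc_chordalize G a"] unfolding chordalize_seq.simps loc_verts
    by (meson Un_least le_supI1 order_trans sup.cobounded2)
qed

lemma cs_noholes: "\<not> (\<exists>H. hole G H) \<Longrightarrow> chordalize_seq G xs = G"
proof (induction xs)
  case Nil then show ?case by simp
next
  case (Cons a xs)
  have "loc_chordalize G a = G"
    using Cons.prems by (simp add: loc_chordalize_def verts_def edges_def)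
  then show ?case using Cons by simp
qed

lemma hat_list: "finite C \<Longrightarrow> distinct (SOME xs. distinct xs \<and> set xs = C) \<and> set (SOME xs. distinct xs \<and> set xs = C) = C"
  by (rule someI_ex) (use finite_distinct_list in blast)

lemma hat_verts[simp]: "verts (hat G C) = verts G"
  by (simp add: hat_def)

lemma hat_mono: "edges G \<subseteq> edges (hat G C)"
  by (simp add: hat_def cs_edges_mono)

lemma hat_upper: "finite C \<Longrightarrow> edges (hat G C) \<subseteq>
   edges G \<union> {{u, w} | u w. u \<in> C \<and> w \<in> verts G \<and> w \<noteq> u}"
proof -
  assume f: "finite C"
  let ?xs = "SOME xs. distinct xs \<and> set xs = C"
  have "set ?xs = C" using hat_list[OF f] by blast
  then show ?thesis unfolding hat_def using cs_edges_upper[of G ?xs] by simp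
qed

lemma hat_noholes: "\<not> (\<exists>H. hole G H) \<Longrightarrow> hat G C = G"
  by (simp add: hat_def cs_noholes)

lemma hat_single: "hat G {a} = loc_chordalize G a"
proof -
  have "distinct (SOME xs. distinct xs \<and> set xs = {a}) \<and> set (SOME xs. distinct xs \<and> set xs = {a}) = {a}"
    by (rule hat_list) simp
  then have "(SOME xs. distinct xs \<and> set xs = {a}) = [a]"
  proof -
    let ?xs = "SOME xs. distinct xs \<and> set xs = {a}"
    assume h: "distinct ?xs \<and> set ?xs = {a}"
    then have "length ?xs = 1" using distinct_card[of ?xs] by simp
    then obtain x where "?xs = [x]" by (metis length_0_conv length_Suc_conv One_nat_def)
    then show "?xs = [a]" using h by simp
  qed
  then show ?thesis by (simp add: hat_def)
qed


fun dl :: "'a set list \<Rightarrow> bool" where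
  "dl [] = True"
| "dl (c # cs) = (c \<inter> \<Union>(set cs) = {} \<and> dl cs)"

definition invs :: "'a graph \<Rightarrow> 'a graph \<Rightarrow> 'a set list \<Rightarrow> bool" where
  "invs G Gs Cs \<longleftrightarrow> verts Gs \<inter> \<Union>(set Cs) = {} \<and> verts Gs \<union> \<Union>(set Cs) = verts G \<and> dl Cs
     \<and> edges_ok Gs \<and> (\<forall>e\<in>edges G. e \<subseteq> verts Gs \<longrightarrow> e \<in> edges Gs)"

definition gi :: "'a graph \<Rightarrow> 'a graph \<Rightarrow> 'a set \<Rightarrow> 'a set list \<Rightarrow> 'a graph" where
  "gi G Gs Ci rest = (verts Gs \<union> Ci, edges Gs \<union> edges (delete G (\<Union> (set rest))))"

fun fin :: "'a graph \<Rightarrow> 'a graph \<Rightarrow> 'a set list \<Rightarrow> 'a graph" where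
  "fin G Gs [] = Gs"
| "fin G Gs (Ci # rest) = fin G (hat (gi G Gs Ci rest) Ci) rest"

lemma lcp_valid_Cons: "lcp_valid G Gs (Ci # rest) \<longleftrightarrow>
   hole_cover (gi G Gs Ci rest) Ci \<and> NC_set (gi G Gs Ci rest) Ci \<and> chordal (hat (gi G Gs Ci rest) Ci)
   \<and> lcp_valid G (hat (gi G Gs Ci rest) Ci) rest"
  by (simp add: gi_def Let_def)

lemma verts_gi[simp]: "verts (gi G Gs Ci rest) = verts Gs \<union> Ci"
  by (simp add: gi_def verts_def)

lemma edges_gi: "edges (gi G Gs Ci rest) = edges Gs \<union> {e \<in> edges G. e \<subseteq> verts G - \<Union> (set rest)}"
  by (simp add: gi_def edges_def delete_def induced_def verts_def)

lemma verts_delete[simp]: "verts (delete G R) = verts G - R"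
  by (auto simp: delete_def induced_def verts_def)

lemma edges_delete: "edges (delete G R) = {e \<in> edges G. e \<subseteq> verts G - R}"
  by (simp add: delete_def induced_def edges_def verts_def)

lemma wf_edges_ok: "wf_graph G \<Longrightarrow> edges_ok G"
  by (simp add: wf_graph_def edges_ok_def)

lemma edges_ok_sub: "edges_ok G \<Longrightarrow> e \<in> edges G \<Longrightarrow> e \<subseteq> verts G"
  unfolding edges_ok_def by force

lemma inv_step:
  assumes wf: "wf_graph G" and iv: "invs G Gs (Ci # rest)"
  shows "verts (gi G Gs Ci rest) = verts G - \<Union>(set rest)"
    and "edges_ok (gi G Gs Ci rest)"
    and "finite Ci"
    and "invs G (hat (gi G Gs Ci rest) Ci) rest"
proof -
  let ?R = "\<Union>(set rest)"
  let ?Gi = "gi G Gs Ci rest"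
  have d1: "verts Gs \<inter> (Ci \<union> ?R) = {}" and u: "verts Gs \<union> (Ci \<union> ?R) = verts G"
    and d2: "Ci \<inter> ?R = {}" and dlr: "dl rest" and eo: "edges_ok Gs"
    and ge: "\<forall>e\<in>edges G. e \<subseteq> verts Gs \<longrightarrow> e \<in> edges Gs"
    using iv unfolding invs_def by auto
  show vg: "verts ?Gi = verts G - ?R" using d1 u d2 by auto
  have eoG: "edges_ok G" using wf by (rule wf_edges_ok)
  show eoi: "edges_ok ?Gi"
    unfolding edges_ok_def edges_gi verts_gi
  proof
    fix e assume "e \<in> edges Gs \<union> {e \<in> edges G. e \<subseteq> verts G - ?R}"
    then show "\<exists>u v. u \<noteq> v \<and> u \<in> verts Gs \<union> Ci \<and> v \<in> verts Gs \<union> Ci \<and> e = {u, v}"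
    proof
      assume "e \<in> edges Gs" then show ?thesis using eo unfolding edges_ok_def by blast
    next
      assume "e \<in> {e \<in> edges G. e \<subseteq> verts G - ?R}"
      then have e1: "e \<in> edges G" and e2: "e \<subseteq> verts G - ?R" by auto
      obtain u v where "u \<noteq> v" "e = {u,v}" using eoG e1 unfolding edges_ok_def by blast
      moreover have "verts G - ?R = verts Gs \<union> Ci" using vg by simp
      ultimately show ?thesis using e2 by auto
    qed
  qed
  have "Ci \<subseteq> verts G" using u by blast
  moreover have "finite (verts G)" using wf unfolding wf_graph_def by blast
  ultimately show fC: "finite Ci" by (rule finite_subset)
  let ?H = "hat ?Gi Ci"
  have vh: "verts ?H = verts G - ?R" using vg by simp
  have "edges_ok ?H"
    unfolding edges_ok_def
  proof
    fix e assume "e \<in> edges ?H"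
    then have "e \<in> edges ?Gi \<union> {{u, w} | u w. u \<in> Ci \<and> w \<in> verts ?Gi \<and> w \<noteq> u}"
      using hat_upper[OF fC] by blast
    then show "\<exists>u v. u \<noteq> v \<and> u \<in> verts ?H \<and> v \<in> verts ?H \<and> e = {u, v}"
    proof
      assume "e \<in> edges ?Gi" then show ?thesis using eoi unfolding edges_ok_def hat_verts by blast
    next
      assume "e \<in> {{u, w} | u w. u \<in> Ci \<and> w \<in> verts ?Gi \<and> w \<noteq> u}"
      then show ?thesis unfolding hat_verts by auto
    qed
  qed
  moreover have "\<forall>e\<in>edges G. e \<subseteq> verts ?H \<longrightarrow> e \<in> edges ?H"
    using hat_mono[of ?Gi Ci] vh unfolding edges_gi by blast
  moreover have "verts ?H \<inter> ?R = {}" using vh by blast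
  moreover have "verts ?H \<union> ?R = verts G" using vh u by blast
  ultimately show "invs G ?H rest" unfolding invs_def using dlr d2 by blast
qed

lemma inv_fin: "wf_graph G \<Longrightarrow> invs G Gs Cs \<Longrightarrow> invs G (fin G Gs Cs) []"
proof (induction Cs arbitrary: Gs)
  case Nil then show ?case by simp
next
  case (Cons a Cs)
  then show ?case using inv_step(4)[OF Cons.prems] by simp
qed

lemma chordal_fin: "lcp_valid G Gs Cs \<Longrightarrow> Cs \<noteq> [] \<Longrightarrow> chordal (fin G Gs Cs)"
proof (induction Cs arbitrary: Gs)
  case Nil then show ?case by simp
next
  case (Cons a Cs)
  show ?case
  proof (cases "Cs = []")
    case True then show ?thesis using Cons.prems by (simp del: lcp_valid.simps add: lcp_valid_Cons)
  next
    case False then show ?thesis using Cons by (simp del: lcp_valid.simps add: lcp_valid_Cons)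
  qed
qed

definition mg :: "'a set \<Rightarrow> 'a set \<Rightarrow> 'a set \<Rightarrow> 'a graph" where
  "mg V A B = (V, {{x,y} | x y. x \<noteq> y \<and> x \<in> V \<and> y \<in> V \<and> \<not>(x\<in>A \<and> y\<in>A) \<and> \<not>(x\<in>B \<and> y\<in>B)})"

lemma mg_verts[simp]: "verts (mg V A B) = V"
  by (simp add: mg_def verts_def)

lemma mg_edges: "edges (mg V A B) = {{x,y} | x y. x \<noteq> y \<and> x \<in> V \<and> y \<in> V \<and> \<not>(x\<in>A \<and> y\<in>A) \<and> \<not>(x\<in>B \<and> y\<in>B)}"
  by (simp add: mg_def edges_def)

lemma mg_adj: "adj (mg V A B) x y \<longleftrightarrow> x \<noteq> y \<and> x \<in> V \<and> y \<in> V \<and> \<not>(x\<in>A \<and> y\<in>A) \<and> \<not>(x\<in>B \<and> y\<in>B)"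
proof
  assume "adj (mg V A B) x y"
  then obtain x' y' where e: "{x,y} = {x',y'}" "x' \<noteq> y' \<and> x' \<in> V \<and> y' \<in> V \<and> \<not>(x'\<in>A \<and> y'\<in>A) \<and> \<not>(x'\<in>B \<and> y'\<in>B)"
    unfolding adj_def mg_edges by blast
  from e(1) have "(x = x' \<and> y = y') \<or> (x = y' \<and> y = x')" by (simp add: doubleton_eq_iff)
  then show "x \<noteq> y \<and> x \<in> V \<and> y \<in> V \<and> \<not>(x\<in>A \<and> y\<in>A) \<and> \<not>(x\<in>B \<and> y\<in>B)" using e(2) by auto
next
  assume "x \<noteq> y \<and> x \<in> V \<and> y \<in> V \<and> \<not>(x\<in>A \<and> y\<in>A) \<and> \<not>(x\<in>B \<and> y\<in>B)"
  then show "adj (mg V A B) x y" unfolding adj_def mg_edges by blast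
qed

lemma mg_sym: "mg V A B = mg V B A"
  unfolding mg_def by (rule arg_cong[where f="Pair V"]) blast

lemma mg_wf: "finite V \<Longrightarrow> wf_graph (mg V A B)"
  unfolding wf_graph_def mg_edges by auto

lemma mg_edge_adj: "e \<in> edges (mg V A B) \<Longrightarrow> \<exists>x y. e = {x,y} \<and> adj (mg V A B) x y"
  unfolding mg_edges adj_def by blast

lemma card_le1: "finite S \<Longrightarrow> (\<forall>x\<in>S. \<forall>y\<in>S. x = y) \<Longrightarrow> card S \<le> 1"
  using card_le_Suc0_iff_eq by fastforce

lemma LB:
  assumes G: "G = mg V X Y" and fV: "finite V" and XY: "X \<inter> Y = {}" and XV: "X \<subseteq> V" and YV: "Y \<subseteq> V"
  shows "lcp_valid G Gs Cs \<Longrightarrow> invs G Gs Cs \<Longrightarrow> (\<forall>H. hole Gs H \<longrightarrow> \<not> H \<subseteq> X)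
   \<Longrightarrow> (\<forall>x\<in>X. \<forall>y\<in>X. x \<noteq> y \<longrightarrow> adj (fin G Gs Cs) x y)
   \<Longrightarrow> S \<subseteq> X \<inter> verts Gs \<Longrightarrow> (\<forall>x\<in>S. \<forall>y\<in>S. \<not> adj Gs x y)
   \<Longrightarrow> card S + card (X - verts Gs) \<le> length Cs + 1"
proof (induction Cs arbitrary: Gs S)
  case Nil
  have "verts Gs \<union> \<Union>(set []) = verts G" using Nil.prems(2) unfolding invs_def by blast
  then have vG: "verts Gs = V" using G by simp
  have fS: "finite S" using Nil.prems(5) vG fV by (meson finite_subset le_infE)
  have "\<forall>x\<in>S. \<forall>y\<in>S. x = y"
  proof (intro ballI)
    fix x y assume "x \<in> S" "y \<in> S"
    then have "x \<in> X" "y \<in> X" "\<not> adj Gs x y" using Nil.prems(5,6) by auto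
    then show "x = y" using Nil.prems(4) by auto
  qed
  then have "card S \<le> 1" using fS by (rule card_le1[rotated])
  moreover have "X - verts Gs = {}" using vG XV by simp
  ultimately show ?case by (simp only: card.empty)
next
  case (Cons Ci rest)
  let ?R = "\<Union>(set rest)"
  let ?Gi = "gi G Gs Ci rest"
  let ?H = "hat ?Gi Ci"
  have wf: "wf_graph G" using G fV mg_wf by blast
  have hc: "hole_cover ?Gi Ci" and nc: "NC_set ?Gi Ci" and ch: "chordal ?H" and lv: "lcp_valid G ?H rest"
    using Cons.prems(1) unfolding lcp_valid_Cons by auto
  note st = inv_step[OF wf Cons.prems(2)]
  have vg: "verts ?Gi = V - ?R" using st(1) G by simp
  have eoi: "edges_ok ?Gi" using st(2) .
  have fC: "finite Ci" using st(3) .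
  have ivH: "invs G ?H rest" using st(4) .
  have dC: "verts Gs \<inter> Ci = {}" using Cons.prems(2) unfolding invs_def by auto
  have eoGs: "edges_ok Gs" using Cons.prems(2) unfolding invs_def by auto
  have vH: "verts ?H = verts Gs \<union> Ci" by simp
  have fvGs: "finite (verts Gs)" using Cons.prems(2) fV G unfolding invs_def
    by (metis finite_Un mg_verts)
  have fin_eq: "fin G Gs (Ci # rest) = fin G ?H rest" by simp
  have noXH: "\<forall>H. hole ?H H \<longrightarrow> \<not> H \<subseteq> X" using ch unfolding chordal_def by blast
  have F3: "(x\<in>X \<and> y\<in>X) \<or> (x\<in>Y \<and> y\<in>Y)"
    if "x \<in> verts ?Gi" "y \<in> verts ?Gi" "x \<noteq> y" "\<not> adj ?Gi x y" for x y
  proof (rule ccontr)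
    assume a: "\<not> ((x\<in>X \<and> y\<in>X) \<or> (x\<in>Y \<and> y\<in>Y))"
    have xyV: "x \<in> V" "y \<in> V" using that(1,2) vg by auto
    have "adj G x y" using a that(3) xyV unfolding G mg_adj by auto
    then have "{x,y} \<in> edges G" unfolding adj_def .
    moreover have "{x,y} \<subseteq> verts G - ?R" using that vg G by auto
    ultimately have "adj ?Gi x y" unfolding adj_def edges_gi by blast
    then show False using that by blast
  qed
  have F4: "\<not> adj ?Gi x y" if "x \<in> Ci" "x \<in> X" "y \<in> X" for x y
  proof
    assume "adj ?Gi x y"
    then have "{x,y} \<in> edges Gs \<or> {x,y} \<in> edges G" unfolding adj_def edges_gi by blast
    then show False
    proof
      assume "{x,y} \<in> edges Gs"
      then have "x \<in> verts Gs" using edges_ok_sub[OF eoGs] by blast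
      then show False using dC that by blast
    next
      assume "{x,y} \<in> edges G"
      then have "adj G x y" unfolding adj_def .
      then show False using that G mg_adj by metis
    qed
  qed
  have F4': "adj ?Gi x y \<longleftrightarrow> adj Gs x y" if "x \<in> X" "y \<in> X" for x y
  proof -
    have "\<not> adj G x y" using that G mg_adj by metis
    then show ?thesis unfolding adj_def edges_gi by blast
  qed
  have hatE: "e \<in> edges ?Gi \<or> (\<exists>u w. e = {u,w} \<and> u \<in> Ci)" if "e \<in> edges ?H" for e
    using that hat_upper[OF fC, of ?Gi] by blast
  have fX: "finite X" using XV fV finite_subset by blast
  show ?case
  proof (cases "card (Ci \<inter> X) \<le> 1")
    case True
    have Sind: "\<forall>x\<in>S. \<forall>y\<in>S. \<not> adj ?H x y"
    proof (intro ballI notI)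
      fix x y assume xy: "x \<in> S" "y \<in> S" and a: "adj ?H x y"
      have xyG: "x \<in> verts Gs" "y \<in> verts Gs" "x \<in> X" "y \<in> X" using xy Cons.prems(5) by auto
      from hatE[OF a[unfolded adj_def]]
      have "adj ?Gi x y"
      proof
        assume "{x,y} \<in> edges ?Gi" then show ?thesis unfolding adj_def .
      next
        assume "\<exists>u w. {x,y} = {u,w} \<and> u \<in> Ci"
        then obtain u w where "{x,y} = {u,w}" "u \<in> Ci" by blast
        then have "u \<in> verts Gs" using xyG by (metis doubleton_eq_iff)
        then show ?thesis using dC \<open>u \<in> Ci\<close> by blast
      qed
      then have "adj Gs x y" using F4' xyG by blast
      then show False using Cons.prems(6) xy by blast
    qed
    have SH: "S \<subseteq> X \<inter> verts ?H" using Cons.prems(5) by auto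
    have IH: "card S + card (X - verts ?H) \<le> length rest + 1"
      using Cons.IH[OF lv ivH noXH _ SH Sind] Cons.prems(4) fin_eq by simp
    have "X - verts Gs \<subseteq> (X - verts ?H) \<union> (Ci \<inter> X)" by auto
    then have "card (X - verts Gs) \<le> card ((X - verts ?H) \<union> (Ci \<inter> X))"
      using fX by (intro card_mono) auto
    also have "\<dots> \<le> card (X - verts ?H) + card (Ci \<inter> X)" by (rule card_Un_le)
    finally show ?thesis using IH True by simp
  next
    case False
    then obtain x x' where xx: "x \<in> Ci" "x \<in> X" "x' \<in> Ci" "x' \<in> X" "x \<noteq> x'"
      using card_le1[of "Ci \<inter> X"] fC by blast
    have CiV: "Ci \<subseteq> verts ?Gi" by simp
    have Yc: "adj ?Gi y y'" if "y \<in> Y" "y' \<in> Y" "y \<in> verts ?Gi" "y' \<in> verts ?Gi" "y \<noteq> y'" for y y'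
    proof (rule ccontr)
      assume na: "\<not> adj ?Gi y y'"
      have xV: "x \<in> verts ?Gi" "x' \<in> verts ?Gi" using xx by auto
      have ne: "x \<notin> Y" "x' \<notin> Y" "y \<notin> X" "y' \<notin> X" using xx that XY by auto
      have ed: "adj ?Gi p q" if "p \<in> verts ?Gi" "q \<in> verts ?Gi" "p \<in> X" "q \<in> Y" for p q
      proof -
        have "p \<noteq> q" "p \<notin> Y" "q \<notin> X" using that XY by auto
        moreover have "p \<in> V" "q \<in> V" using that XV YV by auto
        ultimately have "adj G p q" unfolding G mg_adj by blast
        then have "{p,q} \<in> edges G" unfolding adj_def .
        moreover have "{p,q} \<subseteq> verts G - ?R" using that vg G by auto
        ultimately show ?thesis unfolding adj_def edges_gi by blast
      qed
      have a1: "adj ?Gi x y" using ed xV that xx by blast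
      have a2: "adj ?Gi y x'" using ed xV that xx adj_sym by metis
      have a3: "adj ?Gi x' y'" using ed xV that xx by blast
      have a4: "adj ?Gi y' x" using ed xV that xx adj_sym by metis
      have n1: "\<not> adj ?Gi x x'" using F4 xx by blast
      have dist: "distinct [x,y,x',y']" using xx that ne by auto
      have hh: "hole ?Gi {x,y,x',y'}"
        by (rule hole4[OF dist a1 a2 a3 a4 n1 na]) (use edges_ok_noloop[OF eoi] xV that in auto)
      have "card ({x,y,x',y'} \<inter> Ci) \<le> 1" using nc hh unfolding NC_set_def by blast
      moreover have "{x,x'} \<subseteq> {x,y,x',y'} \<inter> Ci" using xx by auto
      then have "card {x,x'} \<le> card ({x,y,x',y'} \<inter> Ci)" by (intro card_mono) auto
      ultimately show False using xx by simp
    qed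
    have noH: "\<not> (\<exists>H. hole ?Gi H)"
    proof
      assume "\<exists>H. hole ?Gi H"
      then obtain H where "hole ?Gi H" by blast
      then obtain vs where vs: "distinct vs" "set vs = H" "length vs \<ge> 4"
        "\<forall>i<length vs. \<forall>j<length vs. adj ?Gi (vs ! i) (vs ! j) \<longleftrightarrow>
             (j = Suc i mod length vs \<or> i = Suc j mod length vs)" "H \<subseteq> verts ?Gi"
        by (rule hole_obtain)
      have inH: "vs ! k \<in> verts ?Gi" if "k < length vs" for k
        using vs(2,5) that nth_mem by blast
      have allX: "vs ! k \<in> X" if k: "k < length vs" for k
      proof -
        note hf = hole_facts[OF vs(1) vs(3) vs(4) k]
        let ?w = "vs ! ((k+2) mod length vs)"
        have "?w \<in> verts ?Gi" using inH hf by blast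
        then have "(vs!k \<in> X \<and> ?w \<in> X) \<or> (vs!k \<in> Y \<and> ?w \<in> Y)"
          using F3[of "vs!k" ?w] hf inH[OF k] by blast
        moreover have "\<not> (vs!k \<in> Y \<and> ?w \<in> Y)"
          using Yc[of "vs!k" ?w] hf inH[OF k] \<open>?w \<in> verts ?Gi\<close> by blast
        ultimately show ?thesis by blast
      qed
      have old: "vs ! k \<in> verts Gs" if k: "k < length vs" for k
      proof -
        note hf = hole_facts[OF vs(1) vs(3) vs(4) k]
        have "vs ! k \<notin> Ci"
        proof
          assume "vs ! k \<in> Ci"
          then have "\<not> adj ?Gi (vs!k) (vs ! (Suc k mod length vs))"
            using F4 allX k hf by blast
          then show False using hf by blast
        qed
        then show ?thesis using inH[OF k] by simp
      qed
      have "hole Gs H"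
        unfolding hole_def
      proof (intro conjI exI[of _ vs])
        show "H \<subseteq> verts Gs" using old vs(2) by (auto simp: in_set_conv_nth)
        show "distinct vs" "set vs = H" "4 \<le> length vs" using vs by auto
        show "\<forall>i<length vs. \<forall>j<length vs. adj Gs (vs ! i) (vs ! j) \<longleftrightarrow>
             (j = Suc i mod length vs \<or> i = Suc j mod length vs)"
          using vs(4) F4' allX by auto
      qed
      moreover have "H \<subseteq> X" using allX vs(2) by (auto simp: in_set_conv_nth)
      ultimately show False using Cons.prems(3) by blast
    qed
    have HG: "?H = ?Gi" using hat_noholes[OF noH] .
    let ?S = "S \<union> (Ci \<inter> X)"
    have Sind: "\<forall>a\<in>?S. \<forall>b\<in>?S. \<not> adj ?H a b"
    proof (intro ballI)
      fix a b assume ab: "a \<in> ?S" "b \<in> ?S"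
      show "\<not> adj ?H a b" unfolding HG
      proof (cases "a \<in> Ci")
        case True then show "\<not> adj ?Gi a b" using F4 ab Cons.prems(5) by blast
      next
        case False
        show "\<not> adj ?Gi a b"
        proof (cases "b \<in> Ci")
          case True
          have "a \<in> X" "b \<in> X" using ab Cons.prems(5) by auto
          then have "\<not> adj ?Gi b a" using F4 True by blast
          then show ?thesis using adj_sym by metis
        next
          case False2: False
          then have "a \<in> S" "b \<in> S" using ab False by auto
          then show ?thesis using F4' Cons.prems(5,6) by blast
        qed
      qed
    qed
    have SH: "?S \<subseteq> X \<inter> verts ?H" using Cons.prems(5) by auto
    have IH: "card ?S + card (X - verts ?H) \<le> length rest + 1"
      using Cons.IH[OF lv ivH noXH _ SH Sind] Cons.prems(4) fin_eq by simp
    have fS: "finite S" using Cons.prems(5) fvGs finite_subset by blast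
    have c1: "card ?S = card S + card (Ci \<inter> X)"
      using Cons.prems(5) dC fS fC by (intro card_Un_disjoint) auto
    have "X - verts Gs = (X - verts ?H) \<union> (Ci \<inter> X)" using dC by auto
    moreover have "card ((X - verts ?H) \<union> (Ci \<inter> X)) = card (X - verts ?H) + card (Ci \<inter> X)"
      using fX fC by (intro card_Un_disjoint) auto
    ultimately show ?thesis using IH c1 by simp
  qed
qed

lemma dl_from_idx: "(\<forall>i<length Cs. \<forall>j<length Cs. i \<noteq> j \<longrightarrow> Cs ! i \<inter> Cs ! j = {}) \<Longrightarrow> dl Cs"
proof (induction Cs)
  case Nil then show ?case by simp
next
  case (Cons c cs)
  have "c \<inter> \<Union>(set cs) = {}"
  proof (rule ccontr)
    assume "c \<inter> \<Union>(set cs) \<noteq> {}"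
    then obtain x d where "x \<in> c" "d \<in> set cs" "x \<in> d" by blast
    then obtain j where "j < length cs" "cs ! j = d" by (meson in_set_conv_nth)
    then have "(c#cs) ! 0 \<inter> (c#cs) ! Suc j = {}" using Cons.prems by fastforce
    then show False using \<open>x \<in> c\<close> \<open>x \<in> d\<close> \<open>cs ! j = d\<close> by auto
  qed
  moreover have "\<forall>i<length cs. \<forall>j<length cs. i \<noteq> j \<longrightarrow> cs ! i \<inter> cs ! j = {}"
  proof (intro allI impI)
    fix i j assume "i < length cs" "j < length cs" "i \<noteq> j"
    then have "(c#cs) ! Suc i \<inter> (c#cs) ! Suc j = {}" using Cons.prems by (metis Suc_inject Suc_less_eq length_Cons)
    then show "cs ! i \<inter> cs ! j = {}" by simp
  qed
  ultimately show ?case using Cons.IH by simp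
qed

lemma LB_top:
  assumes G: "G = mg V X Y" and fV: "finite V" and XY: "X \<inter> Y = {}" and XV: "X \<subseteq> V" and YV: "Y \<subseteq> V"
    and lc: "lc_partition G C Cs"
    and cl: "\<forall>x\<in>X. \<forall>y\<in>X. x \<noteq> y \<longrightarrow> adj (fin G (delete G C) Cs) x y"
  shows "card X \<le> length Cs + 1"
proof -
  let ?G0 = "delete G C"
  have hc: "hole_cover G C" and lv: "lcp_valid G ?G0 Cs" and un: "\<Union>(set Cs) = C"
    and dj: "\<forall>i<length Cs. \<forall>j<length Cs. i \<noteq> j \<longrightarrow> Cs ! i \<inter> Cs ! j = {}"
    using lc unfolding lc_partition_def by auto
  have CV: "C \<subseteq> V" using hc G unfolding hole_cover_def by simp
  have wf: "wf_graph G" using G fV mg_wf by blast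
  have eoG: "edges_ok G" using wf by (rule wf_edges_ok)
  have v0: "verts ?G0 = V - C" using G by simp
  have e0: "edges ?G0 = {e \<in> edges G. e \<subseteq> V - C}" using G by (simp add: edges_delete)
  have eo0: "edges_ok ?G0"
    unfolding edges_ok_def
  proof
    fix e assume "e \<in> edges ?G0"
    then have e1: "e \<in> edges G" and e2: "e \<subseteq> V - C" using e0 by auto
    obtain u v where "u \<noteq> v" "e = {u,v}" using eoG e1 unfolding edges_ok_def by blast
    then show "\<exists>u v. u \<noteq> v \<and> u \<in> verts ?G0 \<and> v \<in> verts ?G0 \<and> e = {u, v}" using e2 v0 by auto
  qed
  have iv: "invs G ?G0 Cs"
    unfolding invs_def
  proof (intro conjI)
    show "verts ?G0 \<inter> \<Union>(set Cs) = {}" using v0 un by blast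
    show "verts ?G0 \<union> \<Union>(set Cs) = verts G" using v0 un CV G by auto
    show "dl Cs" using dj by (rule dl_from_idx)
    show "edges_ok ?G0" by (rule eo0)
    show "\<forall>e\<in>edges G. e \<subseteq> verts ?G0 \<longrightarrow> e \<in> edges ?G0" using e0 v0 by blast
  qed
  have adj0: "\<not> adj ?G0 x y" if "x \<in> X" "y \<in> X" for x y
  proof
    assume "adj ?G0 x y"
    then have "adj G x y" unfolding adj_def using e0 by blast
    then show False using that G mg_adj by metis
  qed
  have noX: "\<forall>H. hole ?G0 H \<longrightarrow> \<not> H \<subseteq> X"
  proof (intro allI impI notI)
    fix H assume h: "hole ?G0 H" "H \<subseteq> X"
    obtain vs where vs: "distinct vs" "set vs = H" "length vs \<ge> 4"
        "\<forall>i<length vs. \<forall>j<length vs. adj ?G0 (vs ! i) (vs ! j) \<longleftrightarrow>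
             (j = Suc i mod length vs \<or> i = Suc j mod length vs)"
      using h(1) by (rule hole_obtain)
    have k: "0 < length vs" using vs(3) by linarith
    note hf = hole_facts[OF vs(1) vs(3) vs(4) k]
    have "vs ! 0 \<in> X" "vs ! (Suc 0 mod length vs) \<in> X"
      using hf k h(2) vs(2) nth_mem by blast+
    then show False using hf adj0 by blast
  qed
  let ?S = "X - C"
  have SX: "?S \<subseteq> X \<inter> verts ?G0" using v0 XV by auto
  have Si: "\<forall>x\<in>?S. \<forall>y\<in>?S. \<not> adj ?G0 x y" using adj0 by blast
  have "card ?S + card (X - verts ?G0) \<le> length Cs + 1"
    by (rule LB[OF G fV XY XV YV lv iv noX cl SX Si])
  moreover have "X - verts ?G0 = X \<inter> C" using v0 XV by auto
  moreover have "card (X - C) + card (X \<inter> C) = card X"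
  proof -
    have fX: "finite X" using XV fV finite_subset by blast
    have "X = (X - C) \<union> (X \<inter> C)" by blast
    then have "card X = card ((X - C) \<union> (X \<inter> C))" by simp
    also have "\<dots> = card (X - C) + card (X \<inter> C)" using fX by (intro card_Un_disjoint) auto
    finally show ?thesis by simp
  qed
  ultimately show ?thesis by simp
qed


lemma lc_invs:
  assumes wf: "wf_graph G" and lc: "lc_partition G C Cs"
  shows "invs G (delete G C) Cs"
proof -
  let ?G0 = "delete G C"
  have hc: "hole_cover G C" and un: "\<Union>(set Cs) = C"
    and dj: "\<forall>i<length Cs. \<forall>j<length Cs. i \<noteq> j \<longrightarrow> Cs ! i \<inter> Cs ! j = {}"
    using lc unfolding lc_partition_def by auto
  have CV: "C \<subseteq> verts G" using hc unfolding hole_cover_def by simp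
  have eoG: "edges_ok G" using wf by (rule wf_edges_ok)
  have v0: "verts ?G0 = verts G - C" by simp
  have e0: "edges ?G0 = {e \<in> edges G. e \<subseteq> verts G - C}" by (simp add: edges_delete)
  have eo0: "edges_ok ?G0"
    unfolding edges_ok_def
  proof
    fix e assume "e \<in> edges ?G0"
    then have e1: "e \<in> edges G" and e2: "e \<subseteq> verts G - C" using e0 by auto
    obtain u v where "u \<noteq> v" "e = {u,v}" using eoG e1 unfolding edges_ok_def by blast
    then show "\<exists>u v. u \<noteq> v \<and> u \<in> verts ?G0 \<and> v \<in> verts ?G0 \<and> e = {u, v}" using e2 v0 by auto
  qed
  show ?thesis
    unfolding invs_def
  proof (intro conjI)
    show "verts ?G0 \<inter> \<Union>(set Cs) = {}" using v0 un by blast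
    show "verts ?G0 \<union> \<Union>(set Cs) = verts G" using v0 un CV by auto
    show "dl Cs" using dj by (rule dl_from_idx)
    show "edges_ok ?G0" by (rule eo0)
    show "\<forall>e\<in>edges G. e \<subseteq> verts ?G0 \<longrightarrow> e \<in> edges ?G0" using e0 v0 by blast
  qed
qed

lemma nci_lower:
  assumes G: "G = mg V A B" and fV: "finite V" and AB: "A \<inter> B = {}" and AV: "A \<subseteq> V" and BV: "B \<subseteq> V"
    and cAB: "card A \<le> card B" and lc: "lc_partition G C Cs"
  shows "card A \<le> length Cs + 1"
proof -
  let ?F = "fin G (delete G C) Cs"
  have wf: "wf_graph G" using G fV mg_wf by blast
  have iv: "invs G ?F []" using inv_fin[OF wf lc_invs[OF wf lc]] .
  have lv: "lcp_valid G (delete G C) Cs" and ne: "Cs \<noteq> []" using lc unfolding lc_partition_def by auto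
  have ch: "chordal ?F" using chordal_fin[OF lv ne] .
  have vF: "verts ?F = V" using iv G unfolding invs_def by simp
  have eoF: "edges_ok ?F" using iv unfolding invs_def by simp
  have GF: "\<forall>e\<in>edges G. e \<subseteq> verts ?F \<longrightarrow> e \<in> edges ?F" using iv unfolding invs_def by simp
  have adjF: "adj ?F x y" if "x \<noteq> y" "x \<in> V" "y \<in> V" "\<not>(x\<in>A \<and> y\<in>A)" "\<not>(x\<in>B \<and> y\<in>B)" for x y
  proof -
    have "adj G x y" using that unfolding G mg_adj by blast
    then have "{x,y} \<in> edges G" unfolding adj_def .
    moreover have "{x,y} \<subseteq> verts ?F" using vF that by auto
    ultimately show ?thesis using GF unfolding adj_def by blast
  qed
  have "(\<forall>x\<in>A. \<forall>y\<in>A. x \<noteq> y \<longrightarrow> adj ?F x y) \<or> (\<forall>x\<in>B. \<forall>y\<in>B. x \<noteq> y \<longrightarrow> adj ?F x y)"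
  proof (rule ccontr)
    assume "\<not> ?thesis"
    then obtain a a' b b' where ab: "a \<in> A" "a' \<in> A" "a \<noteq> a'" "\<not> adj ?F a a'"
      "b \<in> B" "b' \<in> B" "b \<noteq> b'" "\<not> adj ?F b b'" by blast
    have ne: "a \<notin> B" "a' \<notin> B" "b \<notin> A" "b' \<notin> A" using ab AB by auto
    have V4: "a \<in> V" "a' \<in> V" "b \<in> V" "b' \<in> V" using ab AV BV by auto
    have a1: "adj ?F a b" by (rule adjF) (use ne V4 ab in \<open>blast+\<close>)
    have a2: "adj ?F b a'" by (rule adjF) (use ne V4 ab in \<open>blast+\<close>)
    have a3: "adj ?F a' b'" by (rule adjF) (use ne V4 ab in \<open>blast+\<close>)
    have a4: "adj ?F b' a" by (rule adjF) (use ne V4 ab in \<open>blast+\<close>)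
    have dist: "distinct [a,b,a',b']" using ab ne by auto
    have "hole ?F {a,b,a',b'}"
      by (rule hole4[OF dist a1 a2 a3 a4 ab(4) ab(8)]) (use edges_ok_noloop[OF eoF] vF V4 in auto)
    then show False using ch unfolding chordal_def by blast
  qed
  then show ?thesis
  proof
    assume "\<forall>x\<in>A. \<forall>y\<in>A. x \<noteq> y \<longrightarrow> adj ?F x y"
    then show ?thesis using LB_top[OF G fV AB AV BV lc] by blast
  next
    assume "\<forall>x\<in>B. \<forall>y\<in>B. x \<noteq> y \<longrightarrow> adj ?F x y"
    moreover have G': "G = mg V B A" using G mg_sym by metis
    moreover have "B \<inter> A = {}" using AB by blast
    ultimately have "card B \<le> length Cs + 1" using LB_top[OF G' fV _ BV AV lc] by blast
    then show ?thesis using cAB by simp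
  qed
qed

definition Kg :: "'a graph \<Rightarrow> 'a set \<Rightarrow> 'a set \<Rightarrow> 'a graph" where
  "Kg G A Q = (Q, {e. e \<subseteq> Q \<and> (e \<in> edges G \<or> (\<exists>x y. x \<noteq> y \<and> x \<in> A \<and> y \<in> A \<and> e = {x,y}))})"

lemma Kg_verts[simp]: "verts (Kg G A Q) = Q" by (simp add: Kg_def verts_def)
lemma Kg_edges: "edges (Kg G A Q) = {e. e \<subseteq> Q \<and> (e \<in> edges G \<or> (\<exists>x y. x \<noteq> y \<and> x \<in> A \<and> y \<in> A \<and> e = {x,y}))}"
  by (simp add: Kg_def edges_def)

context
  fixes G :: "'a graph" and V A B :: "'a set"
  assumes G: "G = mg V A B" and fV: "finite V" and AB: "A \<inter> B = {}" and AV: "A \<subseteq> V" and BV: "B \<subseteq> V"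
begin

lemma adjG: "adj G x y \<longleftrightarrow> x \<noteq> y \<and> x \<in> V \<and> y \<in> V \<and> \<not>(x\<in>A \<and> y\<in>A) \<and> \<not>(x\<in>B \<and> y\<in>B)"
  unfolding G by (rule mg_adj)

lemma adj_Kg: "adj (Kg G A Q) x y \<longleftrightarrow> x \<noteq> y \<and> x \<in> Q \<and> y \<in> Q \<and> (adj G x y \<or> (x \<in> A \<and> y \<in> A))"
proof
  assume "adj (Kg G A Q) x y"
  then have s: "{x,y} \<subseteq> Q" and d: "{x,y} \<in> edges G \<or> (\<exists>x' y'. x' \<noteq> y' \<and> x' \<in> A \<and> y' \<in> A \<and> {x,y} = {x',y'})"
    unfolding adj_def Kg_edges by auto
  from d show "x \<noteq> y \<and> x \<in> Q \<and> y \<in> Q \<and> (adj G x y \<or> (x \<in> A \<and> y \<in> A))"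
  proof
    assume "{x,y} \<in> edges G"
    then have "adj G x y" unfolding adj_def .
    then show ?thesis using s adjG by blast
  next
    assume "\<exists>x' y'. x' \<noteq> y' \<and> x' \<in> A \<and> y' \<in> A \<and> {x,y} = {x',y'}"
    then obtain x' y' where "x' \<noteq> y'" "x' \<in> A" "y' \<in> A" "{x,y} = {x',y'}" by blast
    then have "x \<noteq> y" "x \<in> A" "y \<in> A" by (auto simp: doubleton_eq_iff)
    then show ?thesis using s by blast
  qed
next
  assume a: "x \<noteq> y \<and> x \<in> Q \<and> y \<in> Q \<and> (adj G x y \<or> (x \<in> A \<and> y \<in> A))"
  then have s: "{x,y} \<subseteq> Q" by blast
  from a have "{x,y} \<in> edges G \<or> (\<exists>x' y'. x' \<noteq> y' \<and> x' \<in> A \<and> y' \<in> A \<and> {x,y} = {x',y'})"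
    unfolding adj_def by blast
  then show "adj (Kg G A Q) x y" unfolding adj_def Kg_edges using s by blast
qed

lemma Kg_noloop: "\<not> adj (Kg G A Q) v v" using adj_Kg by blast

lemma Kg_chordal: "Q \<subseteq> V \<Longrightarrow> chordal (Kg G A Q)"
  unfolding chordal_def
proof
  assume QV: "Q \<subseteq> V" and "\<exists>H. hole (Kg G A Q) H"
  then obtain H where h: "hole (Kg G A Q) H" by blast
  then have HQ: "H \<subseteq> Q" unfolding hole_def by simp
  show False
  proof (rule no_hole_Y[OF h, of B])
    show "\<forall>x\<in>H. \<forall>y\<in>H. x \<noteq> y \<longrightarrow> \<not> adj (Kg G A Q) x y \<longrightarrow> x \<in> B \<and> y \<in> B"
      using HQ QV unfolding adj_Kg adjG by blast
    show "\<forall>x\<in>H \<inter> B. \<forall>y\<in>H \<inter> B. \<not> adj (Kg G A Q) x y"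
      using AB unfolding adj_Kg adjG by blast
  qed
qed

lemma UB:
  assumes b: "b1 \<in> B" "b2 \<in> B" "b1 \<noteq> b2"
  shows "distinct as \<Longrightarrow> set as \<subseteq> A \<Longrightarrow> lcp_valid G (Kg G A (V - set as)) (map (\<lambda>a. {a}) as)"
proof (induction as)
  case Nil then show ?case by simp
next
  case (Cons a as)
  let ?R = "set as"
  let ?P = "V - set (a # as)"
  let ?Gs = "Kg G A ?P"
  let ?Gi = "gi G ?Gs {a} (map (\<lambda>a. {a}) as)"
  have un: "\<Union> (set (map (\<lambda>a. {a}) as)) = ?R" by auto
  have aR: "a \<notin> ?R" using Cons.prems by simp
  have aA: "a \<in> A" using Cons.prems by simp
  have aV: "a \<in> V" using aA AV by blast
  have vGi: "verts ?Gi = V - ?R" using aR aV by auto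
  have eGi: "edges ?Gi = edges ?Gs \<union> {e \<in> edges G. e \<subseteq> V - ?R}"
    unfolding edges_gi un using G by simp
  have adjGi: "adj ?Gi x y \<longleftrightarrow> (adj G x y \<and> x \<in> V - ?R \<and> y \<in> V - ?R) \<or> adj ?Gs x y" for x y
    unfolding adj_def eGi by blast
  have BP: "B \<subseteq> ?P" using BV AB Cons.prems(2) by auto
  have allA: "a \<in> H" if h: "hole ?Gi H" for H
  proof (rule ccontr)
    assume naH: "a \<notin> H"
    have HV: "H \<subseteq> V - ?R" using h vGi unfolding hole_def by simp
    show False
    proof (rule no_hole_Y[OF h, of B])
      show "\<forall>x\<in>H. \<forall>y\<in>H. x \<noteq> y \<longrightarrow> \<not> adj ?Gi x y \<longrightarrow> x \<in> B \<and> y \<in> B"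
      proof (intro ballI impI)
        fix x y assume xy: "x \<in> H" "y \<in> H" "x \<noteq> y" "\<not> adj ?Gi x y"
        have xP: "x \<in> ?P" "y \<in> ?P" using xy HV naH by auto
        have "\<not> adj G x y" using xy(4) HV xy(1,2) unfolding adjGi by blast
        moreover have "\<not> (x \<in> A \<and> y \<in> A)" using xy(3,4) xP unfolding adjGi adj_Kg by blast
        ultimately show "x \<in> B \<and> y \<in> B" using xP xy(3) unfolding adjG by blast
      qed
      show "\<forall>x\<in>H \<inter> B. \<forall>y\<in>H \<inter> B. \<not> adj ?Gi x y"
        using AB unfolding adjGi adj_Kg adjG by blast
    qed
  qed
  have hc: "hole_cover ?Gi {a}"
    unfolding hole_cover_def using allA vGi aV aR by auto
  have nc: "NC_set ?Gi {a}"
    unfolding NC_set_def NC_vertex_def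
  proof (intro conjI ballI allI impI)
    show "\<not> (\<exists>H H'. hole ?Gi H \<and> u \<in> H \<and> hole ?Gi H' \<and> u \<notin> H' \<and> share_two_consec ?Gi H H')"
      if "u \<in> {a}" for u using allA that by blast
    show "card (H \<inter> {a}) \<le> 1" for H
      using card_mono[of "{a}" "H \<inter> {a}"] by simp
  qed
  have hatK: "hat ?Gi {a} = Kg G A (V - ?R)"
  proof -
    have "edges (loc_chordalize ?Gi a) = edges (Kg G A (V - ?R))"
    proof (intro equalityI subsetI)
      fix e assume "e \<in> edges (loc_chordalize ?Gi a)"
      then consider "e \<in> edges ?Gs" | "e \<in> edges G" "e \<subseteq> V - ?R"
        | w H where "e = {a,w}" "w \<noteq> a" "hole ?Gi H" "a \<in> H" "w \<in> H"
        unfolding loc_edges eGi by blast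
      then show "e \<in> edges (Kg G A (V - ?R))"
      proof cases
        case 1 then show ?thesis unfolding Kg_edges by auto
      next
        case 2 then show ?thesis unfolding Kg_edges by auto
      next
        case 3
        have wV: "w \<in> V - ?R" using 3 vGi unfolding hole_def by blast
        have aVR: "a \<in> V - ?R" using aV aR by blast
        show ?thesis
        proof (cases "adj G a w")
          case True
          then have "e \<in> edges G" using 3 unfolding adj_def by simp
          then show ?thesis using 3 wV aVR unfolding Kg_edges by auto
        next
          case False
          then have "w \<in> A" using 3 wV aV AB aA unfolding adjG by blast
          then show ?thesis using 3 wV aVR aA unfolding Kg_edges by blast
        qed
      qed
    next
      fix e assume "e \<in> edges (Kg G A (V - ?R))"
      then have eR: "e \<subseteq> V - ?R" and
        d: "e \<in> edges G \<or> (\<exists>x y. x \<noteq> y \<and> x \<in> A \<and> y \<in> A \<and> e = {x,y})"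
        unfolding Kg_edges by auto
      from d show "e \<in> edges (loc_chordalize ?Gi a)"
      proof
        assume "e \<in> edges G" then show ?thesis using eR unfolding loc_edges eGi by blast
      next
        assume "\<exists>x y. x \<noteq> y \<and> x \<in> A \<and> y \<in> A \<and> e = {x,y}"
        then obtain x y where xy: "x \<noteq> y" "x \<in> A" "y \<in> A" "e = {x,y}" by blast
        show ?thesis
        proof (cases "a \<in> e")
          case False
          then have "e \<subseteq> ?P" using eR by auto
          then have "e \<in> edges ?Gs" using xy unfolding Kg_edges by blast
          then show ?thesis unfolding loc_edges eGi by blast
        next
          case True
          then obtain y' where y': "e = {a, y'}" "y' \<noteq> a" "y' \<in> A" using xy by auto
          have y'P: "y' \<in> ?P" using y' eR by auto
          have bP: "b1 \<in> V - ?R" "b2 \<in> V - ?R" using BP b by auto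
          have y'VR: "y' \<in> V - ?R" using y'P by auto
          have aVR: "a \<in> V - ?R" using aV aR by blast
          have nb: "a \<notin> B" "y' \<notin> B" "b1 \<notin> A" "b2 \<notin> A" using aA y' b AB by auto
          have ed: "adj ?Gi p q" if "p \<in> A" "q \<in> B" "p \<in> V - ?R" "q \<in> V - ?R" for p q
          proof -
            have "p \<noteq> q" "p \<notin> B" "q \<notin> A" using that AB by auto
            then have "adj G p q" using that unfolding adjG by blast
            then show ?thesis using that unfolding adjGi by blast
          qed
          have a1: "adj ?Gi a b1" using ed aA b bP aVR by blast
          have a2: "adj ?Gi b1 y'" using ed[of y' b1] y' b bP y'VR adj_sym by metis
          have a3: "adj ?Gi y' b2" using ed y' b bP y'VR by blast
          have a4: "adj ?Gi b2 a" using ed[of a b2] aA b bP aVR adj_sym by metis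
          have n1: "\<not> adj ?Gi a y'"
          proof
            assume "adj ?Gi a y'"
            then show False unfolding adjGi adj_Kg adjG using aA y' by auto
          qed
          have n2: "\<not> adj ?Gi b1 b2" unfolding adjGi adj_Kg adjG using b AB by blast
          have dist: "distinct [a, b1, y', b2]" using y' b nb by auto
          have eoi: "\<not> adj ?Gi v v" for v unfolding adjGi adj_Kg adjG by blast
          have hh: "hole ?Gi {a, b1, y', b2}"
            by (rule hole4[OF dist a1 a2 a3 a4 n1 n2 eoi]) (use vGi bP y'VR aVR in auto)
          have "{a, y'} \<in> {{a, w} |w. w \<noteq> a \<and> (\<exists>H. hole ?Gi H \<and> a \<in> H \<and> w \<in> H)}"
            using hh y' by blast
          then show ?thesis unfolding loc_edges y'(1) by blast
        qed
      qed
    qed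
    moreover have "verts (loc_chordalize ?Gi a) = verts (Kg G A (V - ?R))" using vGi by simp
    ultimately have "loc_chordalize ?Gi a = Kg G A (V - ?R)"
      by (simp add: verts_def edges_def prod_eq_iff)
    then show ?thesis by (simp add: hat_single)
  qed
  have ch: "chordal (hat ?Gi {a})" unfolding hatK by (rule Kg_chordal) blast
  have lv: "lcp_valid G (hat ?Gi {a}) (map (\<lambda>a. {a}) as)"
    unfolding hatK using Cons by simp
  show ?case unfolding list.map(2) lcp_valid_Cons using hc nc ch lv by blast
qed

lemma nci_val:
  assumes b: "b1 \<in> B" "b2 \<in> B" "b1 \<noteq> b2" and a0: "a0 \<in> A" and a1: "a1 \<in> A" "a1 \<noteq> a0"
    and cAB: "card A \<le> card B"
  shows "nci G = card A - 1"
proof -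
  have fA: "finite A" using AV fV finite_subset by blast
  let ?C = "A - {a0}"
  obtain as where as: "distinct as" "set as = ?C" using fA finite_distinct_list by (meson finite_Diff)
  let ?Cs = "map (\<lambda>a. {a}) as"
  have nch: "\<not> chordal G"
  proof -
    have nb: "a0 \<notin> B" "a1 \<notin> B" "b1 \<notin> A" "b2 \<notin> A" using a0 a1 b AB by auto
    have V4: "a0 \<in> V" "a1 \<in> V" "b1 \<in> V" "b2 \<in> V" using a0 a1 b AV BV by auto
    have ed: "adj G p q" if "p \<in> A" "q \<in> B" "p \<in> V" "q \<in> V" for p q
      using that AB unfolding adjG by blast
    have dist: "distinct [a0, b1, a1, b2]" using nb a1 b by auto
    have "hole G {a0, b1, a1, b2}"
    proof (rule hole4[OF dist])
      show "adj G a0 b1" "adj G a1 b2" using ed a0 a1 b V4 by blast+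
      show "adj G b1 a1" using ed[of a1 b1] a1 b V4 adj_sym by metis
      show "adj G b2 a0" using ed[of a0 b2] a0 b V4 adj_sym by metis
      show "\<not> adj G a0 a1" using a0 a1 unfolding adjG by blast
      show "\<not> adj G b1 b2" using b unfolding adjG by blast
      show "\<not> adj G v v" for v unfolding adjG by blast
      show "{a0, b1, a1, b2} \<subseteq> verts G" using V4 G by simp
    qed
    then show ?thesis unfolding chordal_def by blast
  qed
  have CV: "?C \<subseteq> V" using AV by blast
  have hcG: "hole_cover G ?C"
    unfolding hole_cover_def
  proof (intro conjI allI impI)
    show "?C \<subseteq> verts G" using CV G by simp
    show "?C \<noteq> {}" using a1 by blast
    fix H assume h: "hole G H"
    show "H \<inter> ?C \<noteq> {}"
    proof
      assume e: "H \<inter> ?C = {}"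
      show False
      proof (rule no_hole_Y[OF h, of B])
        show "\<forall>x\<in>H. \<forall>y\<in>H. x \<noteq> y \<longrightarrow> \<not> adj G x y \<longrightarrow> x \<in> B \<and> y \<in> B"
        proof (intro ballI impI)
          fix x y assume xy: "x \<in> H" "y \<in> H" "x \<noteq> y" "\<not> adj G x y"
          have "x \<in> V" "y \<in> V" using h xy G unfolding hole_def by auto
          then have "(x \<in> A \<and> y \<in> A) \<or> (x \<in> B \<and> y \<in> B)" using xy unfolding adjG by blast
          moreover have "\<not> (x \<in> A \<and> y \<in> A)" using e xy by blast
          ultimately show "x \<in> B \<and> y \<in> B" by blast
        qed
        show "\<forall>x\<in>H \<inter> B. \<forall>y\<in>H \<inter> B. \<not> adj G x y" unfolding adjG by blast
      qed
    qed
  qed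
  have delK: "delete G ?C = Kg G A (V - set as)"
  proof -
    have "edges (delete G ?C) = edges (Kg G A (V - ?C))"
      unfolding edges_delete Kg_edges
    proof (intro equalityI subsetI)
      fix e assume "e \<in> {e \<in> edges G. e \<subseteq> verts G - ?C}"
      then show "e \<in> {e. e \<subseteq> V - ?C \<and> (e \<in> edges G \<or> (\<exists>x y. x \<noteq> y \<and> x \<in> A \<and> y \<in> A \<and> e = {x, y}))}"
        using G by simp
    next
      fix e assume e: "e \<in> {e. e \<subseteq> V - ?C \<and> (e \<in> edges G \<or> (\<exists>x y. x \<noteq> y \<and> x \<in> A \<and> y \<in> A \<and> e = {x, y}))}"
      then have "e \<in> edges G"
      proof -
        have "\<not> (\<exists>x y. x \<noteq> y \<and> x \<in> A \<and> y \<in> A \<and> e = {x, y})" using e by auto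
        then show ?thesis using e by blast
      qed
      then show "e \<in> {e \<in> edges G. e \<subseteq> verts G - ?C}" using e G by simp
    qed
    moreover have "verts (delete G ?C) = verts (Kg G A (V - ?C))" using G by simp
    ultimately have "delete G ?C = Kg G A (V - ?C)"
      unfolding verts_def edges_def by (rule prod_eqI[rotated])
    then show ?thesis using as by simp
  qed
  have lcp: "lcp_valid G (delete G ?C) ?Cs"
  proof -
    have "set as \<subseteq> A" using as(2) by blast
    then have "lcp_valid G (Kg G A (V - set as)) ?Cs" by (rule UB[OF b as(1)])
    then show ?thesis unfolding delK .
  qed
  have lc: "lc_partition G ?C ?Cs"
    unfolding lc_partition_def
  proof (intro conjI)
    show "hole_cover G ?C" by (rule hcG)
    have "a1 \<in> set as" using as(2) a1 by blast
    then show "?Cs \<noteq> []" by (cases as) auto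
    show "\<forall>X\<in>set ?Cs. X \<noteq> {}" by auto
    have "\<Union> (set ?Cs) = set as" by auto
    then show "\<Union> (set ?Cs) = ?C" using as(2) by simp
    show "\<forall>i<length ?Cs. \<forall>j<length ?Cs. i \<noteq> j \<longrightarrow> ?Cs ! i \<inter> ?Cs ! j = {}"
    proof (intro allI impI)
      fix i j assume ij: "i < length ?Cs" "j < length ?Cs" "i \<noteq> j"
      then have "as ! i \<noteq> as ! j" using as(1) by (simp add: nth_eq_iff_index_eq)
      then show "?Cs ! i \<inter> ?Cs ! j = {}" using ij by simp
    qed
    show "lcp_valid G (delete G ?C) ?Cs" by (rule lcp)
  qed
  have len: "length ?Cs = card A - 1"
    using distinct_card[OF as(1)] as(2) a0 fA by simp
  have "(LEAST l. \<exists>C Cs. lc_partition G C Cs \<and> length Cs = l) = card A - 1"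
  proof (rule Least_equality)
    show "\<exists>C Cs. lc_partition G C Cs \<and> length Cs = card A - 1" using lc len by blast
    fix l assume "\<exists>C Cs. lc_partition G C Cs \<and> length Cs = l"
    then obtain C Cs where "lc_partition G C Cs" "length Cs = l" by blast
    then show "card A - 1 \<le> l" using nci_lower[OF G fV AB AV BV cAB] by fastforce
  qed
  then show ?thesis unfolding nci_def using nch by simp
qed

lemma nci_zero:
  assumes "card A \<le> 1"
  shows "nci G = 0"
proof -
  have fA: "finite A" using AV fV finite_subset by blast
  have "chordal G"
    unfolding chordal_def
  proof
    assume "\<exists>H. hole G H"
    then obtain H where h: "hole G H" by blast
    show False
    proof (rule no_hole_Y[OF h, of B])
      show "\<forall>x\<in>H. \<forall>y\<in>H. x \<noteq> y \<longrightarrow> \<not> adj G x y \<longrightarrow> x \<in> B \<and> y \<in> B"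
      proof (intro ballI impI)
        fix x y assume xy: "x \<in> H" "y \<in> H" "x \<noteq> y" "\<not> adj G x y"
        have "x \<in> V" "y \<in> V" using h xy G unfolding hole_def by auto
        then have "(x \<in> A \<and> y \<in> A) \<or> (x \<in> B \<and> y \<in> B)" using xy unfolding adjG by blast
        moreover have "\<not> (x \<in> A \<and> y \<in> A)" using assms fA xy(3) card_le_Suc0_iff_eq by fastforce
        ultimately show "x \<in> B \<and> y \<in> B" by blast
      qed
      show "\<forall>x\<in>H \<inter> B. \<forall>y\<in>H \<inter> B. \<not> adj G x y" unfolding adjG by blast
    qed
  qed
  then show ?thesis unfolding nci_def by simp
qed

end



definition GG :: "nat \<Rightarrow> nat \<Rightarrow> nat graph" where
  "GG s t = mg {0..<(s+t) + (s+t)^(s+t)} {s-1..<s+t} {s+t..<(s+t) + (s+t)^(s+t)}"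

lemma clique_le:
  assumes Q: "Q \<subseteq> verts G" "\<forall>x\<in>Q. \<forall>y\<in>Q. x \<noteq> y \<longrightarrow> adj G x y"
    and f: "proper_coloring G f" "\<forall>v\<in>verts G. f v < (c::nat)" and fin: "finite Q"
  shows "card Q \<le> c"
proof -
  have "inj_on f Q" unfolding inj_on_def using Q f unfolding proper_coloring_def by blast
  then have "card (f ` Q) = card Q" by (rule card_image)
  moreover have "f ` Q \<subseteq> {0..<c}" using Q f by auto
  then have "card (f ` Q) \<le> c" using card_mono[of "{0..<c}"] by fastforce
  ultimately show ?thesis by simp
qed


definition lcol :: "'a graph \<Rightarrow> nat \<Rightarrow> bool" where
  "lcol G k \<longleftrightarrow> (\<forall>L :: 'a \<Rightarrow> nat set. (\<forall>v\<in>verts G. finite (L v) \<and> card (L v) = k) \<longrightarrow>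
        (\<exists>f. proper_coloring G f \<and> (\<forall>v\<in>verts G. f v \<in> L v)))"

lemma lcol_Suc: "lcol G j \<Longrightarrow> lcol G (Suc j)"
  unfolding lcol_def
proof (intro allI impI)
  fix L :: "'a \<Rightarrow> nat set"
  assume P: "\<forall>L :: 'a \<Rightarrow> nat set. (\<forall>v\<in>verts G. finite (L v) \<and> card (L v) = j) \<longrightarrow>
        (\<exists>f. proper_coloring G f \<and> (\<forall>v\<in>verts G. f v \<in> L v))"
    and L: "\<forall>v\<in>verts G. finite (L v) \<and> card (L v) = Suc j"
  define L' where "L' v = (SOME T. T \<subseteq> L v \<and> card T = j \<and> finite T)" for v
  have L': "L' v \<subseteq> L v \<and> card (L' v) = j \<and> finite (L' v)" if "v \<in> verts G" for v
  proof -
    have "j \<le> card (L v)" using L that by simp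
    then obtain T where "T \<subseteq> L v" "card T = j" "finite T" by (rule obtain_subset_with_card_n)
    then have "\<exists>T. T \<subseteq> L v \<and> card T = j \<and> finite T" by blast
    from someI_ex[OF this] show ?thesis unfolding L'_def .
  qed
  then obtain f where "proper_coloring G f" "\<forall>v\<in>verts G. f v \<in> L' v" using P by blast
  then show "\<exists>f. proper_coloring G f \<and> (\<forall>v\<in>verts G. f v \<in> L v)" using L' by blast
qed

lemma lcol_mono: "lcol G j \<Longrightarrow> j \<le> j' \<Longrightarrow> lcol G j'"
proof (induction j' )
  case 0 then show ?case by simp
next
  case (Suc j')
  show ?case
  proof (cases "j = Suc j'")
    case True then show ?thesis using Suc by simp
  next
    case False then show ?thesis using Suc lcol_Suc by simp
  qed
qed

lemma greedy:
  fixes G :: "nat graph" and L :: "nat \<Rightarrow> nat set"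
  assumes cond: "\<forall>x<M. finite (L x) \<and> card {y. y < x \<and> adj G y x} < card (L x)"
    and nl: "\<And>u. \<not> adj G u u"
  shows "n \<le> M \<Longrightarrow> \<exists>f. (\<forall>u<n. \<forall>v<n. adj G u v \<longrightarrow> f u \<noteq> f v) \<and> (\<forall>x<n. f x \<in> L x)"
proof (induction n)
  case 0 then show ?case by simp
next
  case (Suc n)
  then obtain f where f: "\<forall>u<n. \<forall>v<n. adj G u v \<longrightarrow> f u \<noteq> f v" "\<forall>x<n. f x \<in> L x" by auto
  let ?N = "{y. y < n \<and> adj G y n}"
  have nM: "n < M" using Suc.prems by simp
  have fN: "finite ?N" by simp
  have "card (f ` ?N) \<le> card ?N" using fN by (rule card_image_le)
  also have "\<dots> < card (L n)" using cond nM by blast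
  finally have lt: "card (f ` ?N) < card (L n)" .
  have "\<not> L n \<subseteq> f ` ?N"
  proof
    assume "L n \<subseteq> f ` ?N"
    then have "card (L n) \<le> card (f ` ?N)" using fN by (intro card_mono) auto
    then show False using lt by simp
  qed
  then obtain c where c: "c \<in> L n" "c \<notin> f ` ?N" by blast
  let ?g = "f(n := c)"
  have "\<forall>u<Suc n. \<forall>v<Suc n. adj G u v \<longrightarrow> ?g u \<noteq> ?g v"
  proof (intro allI impI)
    fix u v assume uv: "u < Suc n" "v < Suc n" "adj G u v"
    show "?g u \<noteq> ?g v"
    proof (cases "u = n")
      case True
      then have "v \<noteq> n" using uv nl by blast
      then have "v < n" "adj G v n" using uv True adj_sym by (metis less_SucE)+
      then have "f v \<in> f ` ?N" by blast
      then show ?thesis using c True \<open>v \<noteq> n\<close> by auto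
    next
      case False
      then have un: "u < n" using uv by simp
      show ?thesis
      proof (cases "v = n")
        case True
        then have "adj G u n" using uv by simp
        then have "f u \<in> f ` ?N" using un by blast
        then show ?thesis using c True False by auto
      next
        case False2: False
        then have "v < n" using uv by simp
        then show ?thesis using f un uv False False2 by simp
      qed
    qed
  qed
  moreover have "\<forall>x<Suc n. ?g x \<in> L x" using f c by (simp add: less_Suc_eq)
  ultimately show ?case by blast
qed

lemma digits_lt: "(\<forall>u<m. d u < (b::nat)) \<Longrightarrow> (\<Sum>u<m. d u * b^u) < b^m"
proof (induction m)
  case 0 then show ?case by simp
next
  case (Suc m)
  have IH: "(\<Sum>u<m. d u * b^u) < b^m" using Suc by simp
  have "d m < b" using Suc.prems by blast
  then have dm: "d m + 1 \<le> b" by simp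
  have "(\<Sum>u<Suc m. d u * b^u) = (\<Sum>u<m. d u * b^u) + d m * b^m" by simp
  also have "\<dots> < b^m + d m * b^m" using IH by simp
  also have "\<dots> = (d m + 1) * b^m" by simp
  also have "\<dots> \<le> b * b^m" using dm by (intro mult_right_mono) auto
  finally show ?case by simp
qed

lemma digits_nth: "(\<forall>u<m. d u < (b::nat)) \<Longrightarrow> j < m \<Longrightarrow> (\<Sum>u<m. d u * b^u) div b^j mod b = d j"
proof (induction m)
  case 0 then show ?case by simp
next
  case (Suc m)
  have b0: "b > 0" using Suc.prems by (metis gr_zeroI less_nat_zero_code)
  let ?S = "\<Sum>u<m. d u * b^u"
  have eq: "(\<Sum>u<Suc m. d u * b^u) = ?S + d m * b^m" by simp
  show ?case
  proof (cases "j < m")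
    case True
    define r where "r = m - Suc j"
    have r: "m = j + Suc r" using True r_def by simp
    have "d m * b^m = b^j * (b * (d m * b^r))" unfolding r by (simp add: power_add ac_simps)
    then have e1: "?S + d m * b^m = ?S + b^j * (b * (d m * b^r))" by simp
    have e2: "(?S + b^j * (b * (d m * b^r))) div b^j = b * (d m * b^r) + ?S div b^j"
      using b0 by (intro div_mult_self2) simp
    have "(?S + d m * b^m) div b^j = b * (d m * b^r) + ?S div b^j" unfolding e1 by (rule e2)
    then have "(?S + d m * b^m) div b^j mod b = (b * (d m * b^r) + ?S div b^j) mod b" by (rule arg_cong)
    also have "\<dots> = ?S div b^j mod b" by (simp add: mod_add_left_eq)
    also have "\<dots> = d j" using Suc True by simp
    finally show ?thesis using eq by simp
  next
    case False
    then have j: "j = m" using Suc.prems by simp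
    have "?S < b^m" using digits_lt[of m d b] Suc.prems by simp
    have "(?S + b^m * d m) div b^m = d m + ?S div b^m" using b0 by (intro div_mult_self2) simp
    moreover have "?S div b^m = 0" using \<open>?S < b^m\<close> by simp
    ultimately have "(?S + d m * b^m) div b^m = d m" by (simp add: mult.commute)
    moreover have "d m < b" using Suc.prems by blast
    ultimately show ?thesis using j eq by simp
  qed
qed

context
  fixes s t k N :: nat and V A B :: "nat set" and G :: "nat graph"
  assumes s1: "s \<ge> 1"
  defines "k \<equiv> s + t" and "N \<equiv> k ^ k"
  defines "V \<equiv> {0..<k+N}" and "A \<equiv> {s-1..<k}" and "B \<equiv> {k..<k+N}"
  defines "G \<equiv> mg V A B"
begin

lemma k1: "k \<ge> 1" using s1 k_def by simp
lemma N1: "N \<ge> 1" using k1 N_def by simp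
lemma Nk: "N \<ge> k" unfolding N_def using k1
  by (metis One_nat_def le_eq_less_or_eq less_one self_le_power zero_less_iff_neq_zero)

lemma adjGG: "adj G x y \<longleftrightarrow> x \<noteq> y \<and> x \<in> V \<and> y \<in> V \<and> \<not>(x\<in>A \<and> y\<in>A) \<and> \<not>(x\<in>B \<and> y\<in>B)"
  unfolding G_def by (rule mg_adj)

lemma Q_clique: "\<forall>x\<in>{0..<s} \<union> {k}. \<forall>y\<in>{0..<s} \<union> {k}. x \<noteq> y \<longrightarrow> adj G x y"
  unfolding adjGG V_def A_def B_def using N1 k_def by auto

lemma Q_card: "card ({0..<s} \<union> {k}) = s + 1"
  using k_def by simp

lemma Q_sub: "{0..<s} \<union> {k} \<subseteq> verts G"
  unfolding G_def V_def using N1 k_def by auto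

lemma chrom: "chromatic_number G = s + 1"
  unfolding chromatic_number_def
proof (rule Least_equality)
  let ?f = "\<lambda>x::nat. if x < s - 1 then x else if x < k then s - 1 else s"
  have "proper_coloring G ?f"
    unfolding proper_coloring_def adjGG A_def B_def V_def using s1 by auto
  moreover have "\<forall>v\<in>verts G. ?f v < s + 1" by auto
  ultimately show "\<exists>f :: nat \<Rightarrow> nat. proper_coloring G f \<and> (\<forall>v\<in>verts G. f v < s + 1)" by blast
next
  fix c assume "\<exists>f :: nat \<Rightarrow> nat. proper_coloring G f \<and> (\<forall>v\<in>verts G. f v < c)"
  then obtain f :: "nat \<Rightarrow> nat" where f: "proper_coloring G f" "\<forall>v\<in>verts G. f v < c" by blast
  have "card ({0..<s} \<union> {k}) \<le> c"
    by (rule clique_le[OF Q_sub Q_clique f]) simp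
  then show "s + 1 \<le> c" using Q_card by simp
qed

lemma clique_bound: "is_clique G K \<Longrightarrow> card K \<le> s + 1"
proof -
  assume c: "is_clique G K"
  have KV: "K \<subseteq> V" using c unfolding is_clique_def G_def by simp
  have KA: "card (K \<inter> A) \<le> 1"
  proof (rule card_le1)
    show "finite (K \<inter> A)" unfolding A_def by simp
    show "\<forall>x\<in>K \<inter> A. \<forall>y\<in>K \<inter> A. x = y" using c unfolding is_clique_def adjGG by blast
  qed
  have KB: "card (K \<inter> B) \<le> 1"
  proof (rule card_le1)
    show "finite (K \<inter> B)" unfolding B_def by simp
    show "\<forall>x\<in>K \<inter> B. \<forall>y\<in>K \<inter> B. x = y" using c unfolding is_clique_def adjGG by blast
  qed
  have "K \<subseteq> {0..<s-1} \<union> (K \<inter> A) \<union> (K \<inter> B)" using KV unfolding V_def A_def B_def by auto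
  then have "card K \<le> card ({0..<s-1} \<union> (K \<inter> A) \<union> (K \<inter> B))"
    by (intro card_mono) (auto simp: A_def B_def)
  also have "\<dots> \<le> card ({0..<s-1} \<union> (K \<inter> A)) + card (K \<inter> B)" by (rule card_Un_le)
  also have "\<dots> \<le> card {0..<s-1} + card (K \<inter> A) + card (K \<inter> B)" using card_Un_le[of "{0..<s-1}" "K \<inter> A"] by simp
  finally show ?thesis using KA KB s1 by simp
qed

lemma cliq: "clique_number G = s + 1"
  unfolding clique_number_def
proof (rule Max_eqI)
  have "{card K | K. is_clique G K} \<subseteq> card ` Pow V"
    unfolding is_clique_def G_def by auto
  then show "finite {card K | K. is_clique G K}" unfolding V_def
    by (meson finite_atLeastLessThan finite_Pow_iff finite_imageI finite_subset)
  show "y \<le> s + 1" if "y \<in> {card K | K. is_clique G K}" for y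
    using that clique_bound by auto
  have "is_clique G ({0..<s} \<union> {k})" unfolding is_clique_def using Q_sub Q_clique by blast
  then show "s + 1 \<in> {card K | K. is_clique G K}" using Q_card by (metis (mono_tags, lifting) mem_Collect_eq)
qed

lemma lchrom_eq: "list_chromatic_number H = (LEAST k. lcol H k)"
  unfolding list_chromatic_number_def lcol_def by simp

lemma lcol_up: "lcol G (k+1)"
  unfolding lcol_def
proof (intro allI impI)
  fix L :: "nat \<Rightarrow> nat set"
  assume L: "\<forall>v\<in>verts G. finite (L v) \<and> card (L v) = k + 1"
  have vG: "verts G = {0..<k+N}" unfolding G_def V_def by simp
  have cond: "\<forall>x<k+N. finite (L x) \<and> card {y. y < x \<and> adj G y x} < card (L x)"
  proof (intro allI impI conjI)
    fix x assume x: "x < k + N"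
    show "finite (L x)" using L x vG by simp
    have "{y. y < x \<and> adj G y x} \<subseteq> {0..<k}"
      using x unfolding adjGG V_def B_def by auto
    then have "card {y. y < x \<and> adj G y x} \<le> k" using card_mono[of "{0..<k}"] by fastforce
    then show "card {y. y < x \<and> adj G y x} < card (L x)" using L x vG by simp
  qed
  have nl: "\<And>u. \<not> adj G u u" unfolding adjGG by simp
  obtain f where f: "\<forall>u<k+N. \<forall>v<k+N. adj G u v \<longrightarrow> f u \<noteq> f v" "\<forall>x<k+N. f x \<in> L x"
    using greedy[OF cond nl, of "k+N"] by blast
  have "proper_coloring G f" unfolding proper_coloring_def vG using f(1) by simp
  moreover have "\<forall>v\<in>verts G. f v \<in> L v" using f(2) vG by simp
  ultimately show "\<exists>f. proper_coloring G f \<and> (\<forall>v\<in>verts G. f v \<in> L v)" by blast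
qed

lemma lcol_not: "\<not> lcol G k"
proof
  assume P: "lcol G k"
  define L where "L u = (if u < k then {u*k..<u*k+k} else (\<lambda>j. j*k + (u-k) div k^j mod k) ` {0..<k})" for u
  have vG: "verts G = {0..<k+N}" unfolding G_def V_def by simp
  have k0: "k > 0" using k1 by simp
  have Lc: "\<forall>v\<in>verts G. finite (L v) \<and> card (L v) = k"
  proof
    fix v assume "v \<in> verts G"
    show "finite (L v) \<and> card (L v) = k"
    proof (cases "v < k")
      case True then show ?thesis unfolding L_def by simp
    next
      case False
      have "inj_on (\<lambda>j. j*k + (v-k) div k^j mod k) {0..<k}"
      proof (rule inj_onI)
        fix i j assume ij: "i \<in> {0..<k}" "j \<in> {0..<k}"
          and e: "i*k + (v-k) div k^i mod k = j*k + (v-k) div k^j mod k"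
        have "(i*k + (v-k) div k^i mod k) div k = i" using k0 by simp
        moreover have "(j*k + (v-k) div k^j mod k) div k = j" using k0 by simp
        ultimately show "i = j" using e by metis
      qed
      then have "card (L v) = k" unfolding L_def using False by (simp add: card_image)
      then show ?thesis unfolding L_def by simp
    qed
  qed
  then obtain f where f: "proper_coloring G f" "\<forall>v\<in>verts G. f v \<in> L v"
    using P unfolding lcol_def by blast
  define d where "d u = f u - u*k" for u
  have fd: "f u = u*k + d u \<and> d u < k" if "u < k" for u
  proof -
    have "u \<in> verts G" using that vG by simp
    then have "f u \<in> L u" using f(2) by blast
    then have "f u \<in> {u*k..<u*k+k}" using that unfolding L_def by simp
    then show ?thesis unfolding d_def by auto
  qed
  define n where "n = (\<Sum>u<k. d u * k^u)"
  have nN: "n < N" unfolding n_def N_def using digits_lt[of k d k] fd by blast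
  let ?x = "k + n"
  have xV: "?x \<in> verts G" using nN vG by simp
  then have "f ?x \<in> L ?x" using f(2) by blast
  then obtain j where j: "j < k" "f ?x = j*k + n div k^j mod k" unfolding L_def by auto
  have "n div k^j mod k = d j" unfolding n_def using digits_nth[of k d k j] fd j(1) by blast
  then have fx: "f ?x = f j" using j fd by simp
  have "adj G j ?x" unfolding adjGG V_def A_def B_def using j(1) nN by auto
  moreover have "j \<in> verts G" using j(1) vG by simp
  ultimately have "f j \<noteq> f ?x" using f(1) xV unfolding proper_coloring_def by blast
  then show False using fx by simp
qed

lemma lchrom: "list_chromatic_number G = k + 1"
  unfolding lchrom_eq
proof (rule Least_equality)
  show "lcol G (k+1)" by (rule lcol_up)
  fix y assume y: "lcol G y"
  show "k + 1 \<le> y"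
  proof (rule ccontr)
    assume "\<not> k + 1 \<le> y"
    then have "y \<le> k" by simp
    then have "lcol G k" using lcol_mono y by blast
    then show False using lcol_not by simp
  qed
qed

end


theorem theorem4p5:
  fixes s t :: nat
  assumes "s \<ge> 1"
  shows "\<exists>G :: nat graph. wf_graph G \<and>
           chromatic_number G = s + 1 \<and> clique_number G = s + 1 \<and>
           nci G = t \<and> list_chromatic_number G = s + t + 1"
proof -
  define k where "k = s + t"
  define N where "N = k ^ k"
  define V where "V = {0..<k+N}"
  define A where "A = {s-1..<k}"
  define B where "B = {k..<k+N}"
  define G where "G = mg V A B"
  have s1: "s \<ge> 1" by (rule assms)
  have fV: "finite V" unfolding V_def by simp
  have AB: "A \<inter> B = {}" unfolding A_def B_def by auto
  have k1: "k \<ge> 1" using s1 k_def by simp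
  have Nk: "N \<ge> k" unfolding N_def using k1
    by (metis One_nat_def le_eq_less_or_eq less_one self_le_power zero_less_iff_neq_zero)
  have AV: "A \<subseteq> V" unfolding A_def V_def by auto
  have BV: "B \<subseteq> V" unfolding B_def V_def by auto
  have wf: "wf_graph G" unfolding G_def using fV by (rule mg_wf)
  have ch: "chromatic_number G = s + 1"
    using chrom[OF s1, of t] unfolding G_def V_def A_def B_def N_def k_def .
  have cl: "clique_number G = s + 1"
    using cliq[OF s1, of t] unfolding G_def V_def A_def B_def N_def k_def .
  have lc: "list_chromatic_number G = s + t + 1"
    using lchrom[OF s1, of t] unfolding G_def V_def A_def B_def N_def k_def by simp
  have cA: "card A = t + 1" unfolding A_def k_def using s1 by simp
  have nc: "nci G = t"
  proof (cases "t = 0")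
    case True
    then have "card A \<le> 1" using cA by simp
    then show ?thesis using nci_zero[OF G_def fV AB AV BV] True by simp
  next
    case False
    have k2: "k \<ge> 2" using False s1 k_def by simp
    have "k \<le> k ^ k" using Nk N_def by simp
    then have N2: "N \<ge> 2" using k2 N_def by linarith
    have b: "k \<in> B" "k + 1 \<in> B" "k \<noteq> k + 1" unfolding B_def using N2 by auto
    have a: "s - 1 \<in> A" "s \<in> A" "s \<noteq> s - 1" unfolding A_def k_def using s1 False by auto
    have cB: "card B = N" unfolding B_def by simp
    have "card A \<le> card B" using cA cB Nk k_def s1 by linarith
    then have "nci G = card A - 1" using nci_val[OF G_def fV AB AV BV b a] by blast
    then show ?thesis using cA by simp
  qed
  show ?thesis using wf ch cl nc lc by blast
qed

end
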